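(* Let $\mu\in\mathbb{R}$, $\sigma>0$, $\mathbb{L}>0$, $\varepsilon>0$, $c=\frac{\sigma^2+1}{\sigma^2}$, and let $n\in\mathbb{N}\cup\{0\}$ with $n<\frac{2\pi^2}{\mathbb{L}^2\varepsilon^2c}$. For either choice of sign $\pm$ the following hold. If $\sigma^2\neq1$, $$\sum_{k=1}^\infty\left|\int_\mathbb{R}\psi_n(x)e^{-\frac{(x-\mu)^2}{2\sigma^2}\pm i\frac{2\pi}{\mathbb{L}}k\frac x\varepsilon}\,\mathrm{d}x\right|\le C(n,\sigma^2)e^{-\frac{2\pi^2}{\mathbb{L}^2\varepsilon^2c}}\Bigg[\left(2^{n/2}n^{n/2}\left|\frac2c-1\right|^{n/2}+2^{n-1}\left(\frac{|\mu|}{c\sigma^2}\right)^n\right)\left(1+\frac{\mathbb{L}^2\varepsilon^2c}{4\pi^2}\right)+2^{n-1}\left(\frac{2\pi}{\mathbb{L}\varepsilon c}\right)^n\left(1+\frac12e^{n-1}\right)\Bigg],$$ where $C(n,\sigma^2)=\frac{\pi^{1/4}4^n\left(1+\frac n2\right)e^{-\frac{\mu^2}{2\sigma^2}+\frac{\mu^2}{2c\sigma^4}}}{\sqrt{c\cdot2^{n-1}n!}}$. If $\sigma^2=1$, $$\sum_{k=1}^\infty\left|\int_\mathbb{R}\psi_n(x)e^{-\frac{(x-\mu)^2}{2\sigma^2}\pm i\frac{2\pi}{\mathbb{L}}k\frac x\varepsilon}\,\mathrm{d}x\right|\le\frac{\pi^{1/4}2^{n-1}e^{-\frac{\mu^2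}{4}}}{\sqrt{2^nn!}}e^{-\frac{\pi^2}{\mathbb{L}^2\varepsilon^2}}\left(|\mu|^n\left(1+\frac{\mathbb{L}^2\varepsilon^2}{2\pi^2}\right)+\left(\frac{2\pi}{\mathbb{L}\varepsilon}\right)^n\left(1+\frac12e^{n-1}\right)\right).$$
   Context: $H_n$ is the $n$-th physicist's Hermite polynomial and $\psi_n(x)=\frac{1}{\sqrt{\sqrt\pi\,2^n n!}}e^{-x^2/2}H_n(x)$ are the Hermite functions. The convention $0^0:=1$ is used. *)

theory Defs
  imports "HOL-Analysis.Analysis"
begin

fun hermite :: "nat \<Rightarrow> real \<Rightarrow> real" where
  "hermite 0 x = 1"
| "hermite (Suc 0) x = 2 * x"
| "hermite (Suc (Suc n)) x = 2 * x * hermite (Suc n) x - 2 * real (Suc n) * hermite n x"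

definition hermite_fun :: "nat \<Rightarrow> real \<Rightarrow> real" where
  "hermite_fun n x = exp (- x\<^sup>2 / 2) * hermite n x / sqrt (sqrt pi * 2 ^ n * fact n)"

definition gauss_fourier_coeff ::
  "nat \<Rightarrow> real \<Rightarrow> real \<Rightarrow> real \<Rightarrow> real \<Rightarrow> real \<Rightarrow> nat \<Rightarrow> complex" where
  "gauss_fourier_coeff n \<mu> \<sigma> L \<epsilon> s k =
     integral\<^sup>L lborel (\<lambda>x::real.
        complex_of_real (hermite_fun n x * exp (- (x - \<mu>)\<^sup>2 / (2 * \<sigma>\<^sup>2)))
        * exp (\<i> * complex_of_real (s * (2 * pi / L) * real k * (x / \<epsilon>))))"

end

theory Submission
  imports Defs "HOL-Probability.Characteristic_Functions"
begin

lemma std_normal_ft: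
  "integrable lborel (\<lambda>x. std_normal_density x *\<^sub>R iexp (t * x))"
  "(\<integral>x. std_normal_density x *\<^sub>R iexp (t * x) \<partial>lborel) = complex_of_real (exp (- (t^2) / 2))"
proof -
  show int: "integrable lborel (\<lambda>x. std_normal_density x *\<^sub>R iexp (t * x))"
    by (rule Bochner_Integration.integrable_bound[where f="std_normal_density"])
       (auto simp: norm_exp_i_times intro!: measurable_completion)
  have "char std_normal_distribution t = complex_of_real (exp (- (t^2) / 2))"
    by (simp add: char_std_normal_distribution)
  then show "(\<integral>x. std_normal_density x *\<^sub>R iexp (t * x) \<partial>lborel) = complex_of_real (exp (- (t^2) / 2))"
    unfolding char_def by (subst (asm) integral_density) (auto)
qed

definition G :: "real \<Rightarrow> complex \<Rightarrow> real \<Rightarrow> complex" where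
  "G c w x = exp (complex_of_real (-c*x^2/2) + w * complex_of_real x)"

lemma G_affine:
  fixes c r b \<beta> y :: real
  assumes c: "c > 0" and r: "r = sqrt c"
  shows "G c (Complex b \<beta>) (b/c + (1/r) * y) =
    (complex_of_real (sqrt (2*pi) * exp (b^2/(2*c))) * exp (\<i> * complex_of_real (\<beta>*b/c))) *
      (std_normal_density y *\<^sub>R iexp ((\<beta>/r) * y))"
proof -
  have r2: "r^2 = c" "r > 0" using c r by auto
  have sp: "sqrt (2*pi) > 0" by simp
  have "(complex_of_real (sqrt (2*pi) * exp (b^2/(2*c))) * exp (\<i> * complex_of_real (\<beta>*b/c))) *
      (std_normal_density y *\<^sub>R iexp ((\<beta>/r) * y))
     = complex_of_real (exp (b^2/(2*c))) * exp (\<i> * complex_of_real (\<beta>*b/c)) *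
       complex_of_real (exp (- (y^2)/2)) * iexp ((\<beta>/r) * y)"
    using sp by (simp add: std_normal_density_def scaleR_conv_of_real field_simps)
  also have "\<dots> = exp (complex_of_real (b^2/(2*c)) + \<i> * complex_of_real (\<beta>*b/c) +
       complex_of_real (- (y^2)/2) + \<i> * complex_of_real ((\<beta>/r) * y))"
    by (simp only: exp_of_real[symmetric] exp_add)
  also have "complex_of_real (b^2/(2*c)) + \<i> * complex_of_real (\<beta>*b/c) +
       complex_of_real (- (y^2)/2) + \<i> * complex_of_real ((\<beta>/r) * y)
     = complex_of_real (-c*(b/c + (1/r) * y)^2/2) + Complex b \<beta> * complex_of_real (b/c + (1/r) * y)"
    using r2 c by (simp add: complex_eq_iff field_simps power2_eq_square)
  finally show ?thesis unfolding G_def by simp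
qed

lemma G_integral:
  fixes c :: real and w :: complex
  assumes c: "c > 0"
  shows "integrable lborel (G c w)"
    "(\<integral>x. G c w x \<partial>lborel) = complex_of_real (sqrt (2*pi/c)) * exp (w^2 / (2*c))"
proof -
  define r where "r = sqrt c"
  define b where "b = Re w"
  define \<beta> where "\<beta> = Im w"
  have w: "w = Complex b \<beta>" by (simp add: b_def \<beta>_def)
  have r: "r > 0" "r^2 = c" using c by (auto simp: r_def)
  define K where "K = complex_of_real (sqrt (2*pi) * exp (b^2/(2*c))) * exp (\<i> * complex_of_real (\<beta>*b/c))"
  have eq: "(\<lambda>y. G c w (b/c + (1/r) * y)) = (\<lambda>y. K * (std_normal_density y *\<^sub>R iexp ((\<beta>/r) * y)))"
    unfolding w K_def using G_affine[OF c r_def] by simp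
  have i1: "integrable lborel (\<lambda>y. G c w (b/c + (1/r) * y))"
    unfolding eq by (intro integrable_mult_right std_normal_ft)
  then show "integrable lborel (G c w)"
    using lborel_integrable_real_affine_iff[of "1/r" "G c w" "b/c"] r by simp
  have "(\<integral>x. G c w x \<partial>lborel) = \<bar>1/r\<bar> *\<^sub>R (\<integral>y. G c w (b/c + (1/r) * y) \<partial>lborel)"
    using lborel_integral_real_affine[of "1/r" "G c w" "b/c"] r by simp
  also have "\<dots> = (1/r) *\<^sub>R (K * complex_of_real (exp (- ((\<beta>/r)^2) / 2)))"
    unfolding eq integral_mult_right_zero std_normal_ft using r by simp
  also have "\<dots> = complex_of_real (sqrt (2*pi/c)) * exp (w^2 / (2*c))"
  proof -
    have w2: "w^2 / (2*c) = complex_of_real ((b^2 - \<beta>^2)/(2*c)) + \<i> * complex_of_real (\<beta>*b/c)"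
      unfolding w using c by (simp add: complex_eq_iff power2_eq_square field_simps)
    then have e: "exp (w^2 / (2*c)) = complex_of_real (exp ((b^2 - \<beta>^2)/(2*c))) * exp (\<i> * complex_of_real (\<beta>*b/c))"
      by (subst w2) (simp only: exp_add exp_of_real)
    have s: "sqrt (2*pi/c) = sqrt (2*pi) / r" using r by (simp add: r_def real_sqrt_divide)
    have x: "exp (b^2/(2*c)) * exp (- ((\<beta>/r)^2) / 2) = exp ((b^2 - \<beta>^2)/(2*c))"
      using r c by (simp add: exp_add[symmetric] power_divide field_simps)
    show ?thesis unfolding e s K_def scaleR_conv_of_real
      using x[symmetric] by (simp add: field_simps)
  qed
  finally show "(\<integral>x. G c w x \<partial>lborel) = complex_of_real (sqrt (2*pi/c)) * exp (w^2 / (2*c))" .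
qed

lemma pow_le_fact_exp:
  fixes y :: real assumes y: "y \<ge> 0" shows "y^n \<le> fact n * exp y"
proof -
  have "(\<Sum>k\<in>{n}. y^k /\<^sub>R fact k) \<le> (\<Sum>k. y^k /\<^sub>R fact k)"
    by (rule sum_le_suminf[OF summable_exp_generic]) (use y in auto)
  then have "y^n / fact n \<le> exp y" by (simp add: exp_def divide_inverse mult.commute)
  then show ?thesis by (simp add: divide_le_eq mult.commute)
qed

lemma hermite_deriv_aux:
  "(\<forall>x. (hermite (Suc n) has_real_derivative (2 * real (Suc n) * hermite n x)) (at x)) \<and>
   (\<forall>x. (hermite (Suc (Suc n)) has_real_derivative (2 * real (Suc (Suc n)) * hermite (Suc n) x)) (at x))"
proof (induction n)
  case 0
  have e1: "hermite (Suc 0) = (\<lambda>x. 2 * x)" by (rule ext) simp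
  have e2: "hermite (Suc (Suc 0)) = (\<lambda>x. 2 * x * (2 * x) - 2)" by (rule ext) simp
  show ?case unfolding e1 e2
    by (auto intro!: derivative_eq_intros)
next
  case (Suc n)
  then have IH1: "\<And>x. (hermite (Suc n) has_real_derivative (2 * real (Suc n) * hermite n x)) (at x)"
    and IH2: "\<And>x. (hermite (Suc (Suc n)) has_real_derivative (2 * real (Suc (Suc n)) * hermite (Suc n) x)) (at x)"
    by blast+
  have e: "hermite (Suc (Suc (Suc n))) = (\<lambda>x. 2 * x * hermite (Suc (Suc n)) x - 2 * real (Suc (Suc n)) * hermite (Suc n) x)"
    by (rule ext) simp
  have "(hermite (Suc (Suc (Suc n))) has_real_derivative (2 * real (Suc (Suc (Suc n))) * hermite (Suc (Suc n)) x)) (at x)" for x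
  proof -
    have d1: "((\<lambda>x. 2*x) has_real_derivative 2) (at x)" by (auto intro!: derivative_eq_intros)
    have "((\<lambda>x. 2 * x * hermite (Suc (Suc n)) x - 2 * real (Suc (Suc n)) * hermite (Suc n) x) has_real_derivative
       (2 * hermite (Suc (Suc n)) x + 2 * x * (2 * real (Suc (Suc n)) * hermite (Suc n) x) -
        2 * real (Suc (Suc n)) * (2 * real (Suc n) * hermite n x))) (at x)"
      using DERIV_diff[OF DERIV_mult[OF d1 IH2] DERIV_cmult[OF IH1, of "2 * real (Suc (Suc n))"]]
      by (simp add: algebra_simps)
    then show ?thesis unfolding e
      by (rule DERIV_cong) (simp add: algebra_simps)
  qed
  then show ?case using IH2 by blast
qed

lemma hermite_deriv: "(hermite (Suc n) has_real_derivative (2 * real (Suc n) * hermite n x)) (at x)"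
  using hermite_deriv_aux by blast

lemma hermite_deriv': "(hermite n has_real_derivative (2 * real n * hermite (n - 1) x)) (at x)"
proof (cases n)
  case 0
  have "hermite 0 = (\<lambda>x. 1)" by (rule ext) simp
  then show ?thesis using 0 by simp
next
  case (Suc m)
  then show ?thesis using hermite_deriv[of m x] by simp
qed

lemma hermite_cont: "continuous_on UNIV (hermite n)"
  using hermite_deriv' by (meson DERIV_continuous continuous_at_imp_continuous_on)

lemma hermite_rec: "2 * x * hermite n x = hermite (Suc n) x + 2 * real n * hermite (n - 1) x"
  by (cases n) auto

lemma hermite_bound: "\<exists>K\<ge>0. \<forall>x. \<bar>hermite n x\<bar> \<le> K * (1 + \<bar>x\<bar>)^n"
proof (induction n rule: nat_less_induct)
  case (1 n)
  show ?case
  proof (cases n)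
    case 0 then show ?thesis by (intro exI[of _ 1]) auto
  next
    case (Suc m)
    show ?thesis
    proof (cases m)
      case 0 then show ?thesis using Suc by (intro exI[of _ 2]) auto
    next
      case (Suc k)
      have "Suc k < n" "k < n" using \<open>n = Suc m\<close> Suc by auto
      then have e1: "\<exists>K\<ge>0. \<forall>x. \<bar>hermite (Suc k) x\<bar> \<le> K * (1 + \<bar>x\<bar>)^(Suc k)"
        and e0: "\<exists>K\<ge>0. \<forall>x. \<bar>hermite k x\<bar> \<le> K * (1 + \<bar>x\<bar>)^k"
        using 1 by blast+
      obtain K1 where K1: "K1 \<ge> 0" "\<And>x. \<bar>hermite (Suc k) x\<bar> \<le> K1 * (1 + \<bar>x\<bar>)^(Suc k)"
        using e1 by blast
      obtain K0 where K0: "K0 \<ge> 0" "\<And>x. \<bar>hermite k x\<bar> \<le> K0 * (1 + \<bar>x\<bar>)^k"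
        using e0 by blast
      have "\<bar>hermite (Suc (Suc k)) x\<bar> \<le> (2 * K1 + 2 * real (Suc k) * K0) * (1 + \<bar>x\<bar>)^(Suc (Suc k))" for x
      proof -
        have q: "1 \<le> 1 + \<bar>x\<bar>" by simp
        have p1: "(1 + \<bar>x\<bar>)^k \<le> (1 + \<bar>x\<bar>)^(Suc (Suc k))"
          by (rule power_increasing) (use q in auto)
        have "\<bar>hermite (Suc (Suc k)) x\<bar> \<le> 2 * \<bar>x\<bar> * \<bar>hermite (Suc k) x\<bar> + 2 * real (Suc k) * \<bar>hermite k x\<bar>"
          unfolding hermite.simps by (rule order_trans[OF abs_triangle_ineq4]) (simp add: abs_mult)
        also have "\<dots> \<le> 2 * (1 + \<bar>x\<bar>) * (K1 * (1 + \<bar>x\<bar>)^(Suc k)) + 2 * real (Suc k) * (K0 * (1 + \<bar>x\<bar>)^(Suc (Suc k)))"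
        proof (rule add_mono[OF mult_mono[OF _ K1(2)] mult_left_mono])
          show "\<bar>hermite k x\<bar> \<le> K0 * (1 + \<bar>x\<bar>) ^ Suc (Suc k)"
            by (rule order_trans[OF K0(2) mult_left_mono[OF p1 K0(1)]])
        qed auto
        also have "\<dots> = (2 * K1 + 2 * real (Suc k) * K0) * (1 + \<bar>x\<bar>)^(Suc (Suc k))"
          by (simp add: algebra_simps)
        finally show ?thesis .
      qed
      then show ?thesis using K0 K1 \<open>n = Suc m\<close> Suc by (intro exI[of _ "2 * K1 + 2 * real (Suc k) * K0"]) auto
    qed
  qed
qed

lemma norm_G: "norm (G c w x) = exp (-c*x^2/2 + Re w * x)"
  by (simp add: G_def)

lemma G_cont: "continuous_on UNIV (G c w)"
  unfolding G_def by (intro continuous_intros) auto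

lemma G_deriv: "(G c w has_vector_derivative (G c w x * (w - complex_of_real (c*x)))) (at x)"
proof -
  define g where "g z = exp (- complex_of_real c * z^2 / 2 + w * z)" for z
  have e: "G c w = (\<lambda>x. g (complex_of_real x))" by (rule ext) (simp add: G_def g_def)
  have "(g has_field_derivative (g (complex_of_real x) * (w - complex_of_real (c*x)))) (at (complex_of_real x))"
    unfolding g_def by (auto intro!: derivative_eq_intros simp: algebra_simps)
  then show ?thesis unfolding e by (rule has_vector_derivative_real_field)
qed

lemma exp_abs_bound:
  fixes x b c :: real
  shows "exp (\<bar>x\<bar>) * exp (-c*x^2/2 + b * x) \<le> exp (-c*x^2/2 + (b+1) * x) + exp (-c*x^2/2 + (b-1) * x)"
proof (cases "x \<ge> 0")
  case True
  then have "exp (\<bar>x\<bar>) * exp (-c*x^2/2 + b * x) = exp (-c*x^2/2 + (b+1) * x)"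
    by (simp add: exp_add[symmetric] algebra_simps)
  then show ?thesis by simp
next
  case False
  then have "exp (\<bar>x\<bar>) * exp (-c*x^2/2 + b * x) = exp (-c*x^2/2 + (b-1) * x)"
    by (simp add: exp_add[symmetric] algebra_simps)
  then show ?thesis by simp
qed

lemma integrable_HG:
  assumes c: "c > 0"
  shows "integrable lborel (\<lambda>x. complex_of_real (hermite n x) * G c w x)"
proof -
  obtain K where K: "K \<ge> 0" "\<And>x. \<bar>hermite n x\<bar> \<le> K * (1+\<bar>x\<bar>)^n" using hermite_bound by blast
  define b where "b = Re w"
  have bnd: "norm (complex_of_real (hermite n x) * G c w x) \<le>
     K * fact n * exp 1 * (norm (G c (w+1) x) + norm (G c (w-1) x))" for x
  proof -
    have "norm (complex_of_real (hermite n x) * G c w x) = \<bar>hermite n x\<bar> * exp (-c*x^2/2 + b*x)"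
      by (simp add: norm_mult norm_G b_def)
    also have "\<dots> \<le> K * (1+\<bar>x\<bar>)^n * exp (-c*x^2/2 + b*x)"
      by (intro mult_right_mono K) auto
    also have "\<dots> \<le> K * (fact n * exp (1 + \<bar>x\<bar>)) * exp (-c*x^2/2 + b*x)"
      by (intro mult_right_mono mult_left_mono pow_le_fact_exp K) auto
    also have "\<dots> = K * fact n * exp 1 * (exp (\<bar>x\<bar>) * exp (-c*x^2/2 + b*x))"
      by (simp add: exp_add)
    also have "\<dots> \<le> K * fact n * exp 1 * (exp (-c*x^2/2 + (b+1) * x) + exp (-c*x^2/2 + (b-1) * x))"
      by (intro mult_left_mono exp_abs_bound) (use K in auto)
    also have "\<dots> = K * fact n * exp 1 * (norm (G c (w+1) x) + norm (G c (w-1) x))"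
      by (simp add: norm_G b_def)
    finally show ?thesis .
  qed
  have i: "integrable lborel (\<lambda>x. K * fact n * exp 1 * (norm (G c (w+1) x) + norm (G c (w-1) x)))"
    using G_integral(1)[OF c, of "w+1"] G_integral(1)[OF c, of "w-1"]
    by (intro integrable_mult_right Bochner_Integration.integrable_add integrable_norm)
  show ?thesis
  proof (rule Bochner_Integration.integrable_bound[OF i])
    show "(\<lambda>x. complex_of_real (hermite n x) * G c w x) \<in> borel_measurable lborel"
    proof -
      have "continuous_on UNIV (\<lambda>x. complex_of_real (hermite n x) * G c w x)"
        by (intro continuous_intros hermite_cont G_cont)
      then show ?thesis by (simp add: borel_measurable_continuous_onI)
    qed
    show "AE x in lborel. norm (complex_of_real (hermite n x) * G c w x)
         \<le> norm (K * fact n * exp 1 * (norm (G c (w+1) x) + norm (G c (w-1) x)))"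
      using bnd K by (auto intro!: order_trans[OF bnd])
  qed
qed

lemma filterlim_T_abs_top: "filterlim (\<lambda>x::real. T - \<bar>x\<bar>) at_bot at_top"
  unfolding filterlim_at_bot
proof
  fix Z show "eventually (\<lambda>x::real. T - \<bar>x\<bar> \<le> Z) at_top"
    unfolding eventually_at_top_linorder by (rule exI[of _ "T - Z"]) auto
qed

lemma filterlim_T_abs_bot: "filterlim (\<lambda>x::real. T - \<bar>x\<bar>) at_bot at_bot"
  unfolding filterlim_at_bot
proof
  fix Z show "eventually (\<lambda>x::real. T - \<bar>x\<bar> \<le> Z) at_bot"
    unfolding eventually_at_bot_linorder by (rule exI[of _ "Z - T"]) auto
qed

lemma quad_bound:
  fixes c t y :: real assumes "c > 0" shows "t * y - c * y^2 / 2 \<le> t^2 / (2*c)"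
proof -
  have "0 \<le> (c*y - t)^2" by simp
  then have "0 \<le> c^2*y^2 - 2*c*t*y + t^2" by (simp add: power2_eq_square algebra_simps)
  then show ?thesis using assms by (simp add: field_simps power2_eq_square)
qed

lemma HG_bound:
  assumes c: "c > 0"
  shows "\<exists>M T. \<forall>x. norm (complex_of_real (hermite n x) * G c w x) \<le> M * exp (T - \<bar>x\<bar>)"
proof -
  obtain K where K: "K \<ge> 0" "\<And>x. \<bar>hermite n x\<bar> \<le> K * (1+\<bar>x\<bar>)^n" using hermite_bound by blast
  define b where "b = Re w"
  define T where "T = (\<bar>b\<bar> + 2)^2 / (2*c)"
  have "norm (complex_of_real (hermite n x) * G c w x) \<le> K * fact n * exp 1 * exp (T - \<bar>x\<bar>)" for x
  proof -
    have "norm (complex_of_real (hermite n x) * G c w x) = \<bar>hermite n x\<bar> * exp (-c*x^2/2 + b*x)"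
      by (simp add: norm_mult norm_G b_def)
    also have "\<dots> \<le> K * (1+\<bar>x\<bar>)^n * exp (-c*x^2/2 + b*x)"
      by (intro mult_right_mono K) auto
    also have "\<dots> \<le> K * (fact n * exp (1 + \<bar>x\<bar>)) * exp (-c*x^2/2 + b*x)"
      by (intro mult_right_mono mult_left_mono pow_le_fact_exp K) auto
    also have "\<dots> = K * fact n * exp 1 * exp (\<bar>x\<bar> - c*x^2/2 + b*x)"
      by (simp add: exp_add[symmetric] algebra_simps)
    also have "\<dots> \<le> K * fact n * exp 1 * exp (T - \<bar>x\<bar>)"
    proof -
      have "b * x \<le> \<bar>b\<bar> * \<bar>x\<bar>" by (metis abs_ge_self abs_mult)
      moreover have "(\<bar>b\<bar> + 2) * \<bar>x\<bar> - c * \<bar>x\<bar>^2 / 2 \<le> T"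
        unfolding T_def by (rule quad_bound[OF c])
      ultimately have "\<bar>x\<bar> - c*x^2/2 + b*x \<le> T - \<bar>x\<bar>" by (simp add: algebra_simps)
      then show ?thesis using K by (intro mult_left_mono) auto
    qed
    finally show ?thesis .
  qed
  then show ?thesis by blast
qed

lemma HG_lim:
  assumes c: "c > 0"
  shows "((\<lambda>x. complex_of_real (hermite n x) * G c w x) \<longlongrightarrow> 0) at_top"
        "((\<lambda>x. complex_of_real (hermite n x) * G c w x) \<longlongrightarrow> 0) at_bot"
proof -
  obtain M T where MT: "\<And>x. norm (complex_of_real (hermite n x) * G c w x) \<le> M * exp (T - \<bar>x\<bar>)"
    using HG_bound[OF c] by blast
  show "((\<lambda>x. complex_of_real (hermite n x) * G c w x) \<longlongrightarrow> 0) at_top"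
    by (rule Lim_null_comparison[OF always_eventually[OF allI[OF MT]]])
       (rule tendsto_mult_right_zero[OF filterlim_compose[OF exp_at_bot filterlim_T_abs_top]])
  show "((\<lambda>x. complex_of_real (hermite n x) * G c w x) \<longlongrightarrow> 0) at_bot"
    by (rule Lim_null_comparison[OF always_eventually[OF allI[OF MT]]])
       (rule tendsto_mult_right_zero[OF filterlim_compose[OF exp_at_bot filterlim_T_abs_bot]])
qed

lemma ibp_R:
  fixes F f :: "real \<Rightarrow> complex"
  assumes d: "\<And>x. (F has_vector_derivative f x) (at x)"
    and cf: "continuous_on UNIV f" and i: "integrable lborel f"
    and t: "(F \<longlongrightarrow> 0) at_top" and b: "(F \<longlongrightarrow> 0) at_bot"
  shows "integral\<^sup>L lborel f = 0"
proof -
  have "(LBINT x=-\<infinity>..\<infinity>. f x) = 0 - 0"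
  proof (rule interval_integral_FTC_integrable[where F=F])
    show "set_integrable lborel (einterval (-\<infinity>) \<infinity>) f"
      using i by (simp add: set_integrable_def einterval_def)
    show "((F \<circ> real_of_ereal) \<longlongrightarrow> 0) (at_right (-\<infinity>))"
      using b by (simp add: ereal_tendsto_simps1)
    show "((F \<circ> real_of_ereal) \<longlongrightarrow> 0) (at_left \<infinity>)"
      using t by (simp add: ereal_tendsto_simps1)
  qed (use d cf in \<open>auto simp: continuous_on_eq_continuous_at\<close>)
  then show ?thesis
    by (simp add: interval_lebesgue_integral_def set_lebesgue_integral_def einterval_def)
qed

definition J :: "real \<Rightarrow> complex \<Rightarrow> nat \<Rightarrow> complex" where
  "J c w m = integral\<^sup>L lborel (\<lambda>x. complex_of_real (hermite m x) * G c w x)"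

lemma J_rel:
  assumes c: "c > 0"
  shows "complex_of_real (2 * real n * (1 - c/2)) * J c w (n - 1) + w * J c w n
           - complex_of_real (c/2) * J c w (Suc n) = 0"
proof -
  let ?HG = "\<lambda>m x. complex_of_real (hermite m x) * G c w x"
  define f where "f x = complex_of_real (hermite n x) * (G c w x * (w - complex_of_real (c*x)))
      + complex_of_real (2 * real n * hermite (n - 1) x) * G c w x" for x
  have fe: "f = (\<lambda>x. complex_of_real (2 * real n * (1 - c/2)) * ?HG (n-1) x + w * ?HG n x
           - complex_of_real (c/2) * ?HG (Suc n) x)"
  proof (rule ext)
    fix x
    have "c * x * hermite n x = c/2 * (2 * x * hermite n x)" by simp
    also have "\<dots> = c/2 * (hermite (Suc n) x + 2 * real n * hermite (n - 1) x)"
      by (simp only: hermite_rec)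
    also have "\<dots> = c/2 * hermite (Suc n) x + c * real n * hermite (n - 1) x"
      by (simp add: algebra_simps)
    finally have r: "c * x * hermite n x = c/2 * hermite (Suc n) x + c * real n * hermite (n - 1) x" .
    have "f x = (complex_of_real (hermite n x) * w - complex_of_real (c * x * hermite n x)
        + complex_of_real (2 * real n * hermite (n - 1) x)) * G c w x"
      unfolding f_def by (simp add: algebra_simps)
    also have "\<dots> = (complex_of_real (hermite n x) * w - complex_of_real (c/2 * hermite (Suc n) x + c * real n * hermite (n - 1) x)
        + complex_of_real (2 * real n * hermite (n - 1) x)) * G c w x"
      by (simp only: r)
    also have "\<dots> = complex_of_real (2 * real n * (1 - c/2)) * ?HG (n-1) x + w * ?HG n x
           - complex_of_real (c/2) * ?HG (Suc n) x"
      by (simp add: algebra_simps)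
    finally show "f x = complex_of_real (2 * real n * (1 - c/2)) * ?HG (n-1) x + w * ?HG n x
           - complex_of_real (c/2) * ?HG (Suc n) x" .
  qed
  have iHG: "\<And>m. integrable lborel (?HG m)" using integrable_HG[OF c] by blast
  have intf: "integrable lborel f" unfolding fe
    by (intro Bochner_Integration.integrable_diff Bochner_Integration.integrable_add integrable_mult_right iHG)
  have "integral\<^sup>L lborel f = 0"
  proof (rule ibp_R[OF _ _ intf HG_lim(1)[OF c, of n w] HG_lim(2)[OF c, of n w]])
    show "(?HG n has_vector_derivative f x) (at x)" for x
      unfolding f_def
      by (rule has_vector_derivative_mult[OF has_vector_derivative_of_real[OF hermite_deriv'] G_deriv])
    show "continuous_on UNIV f"
      unfolding f_def by (intro continuous_intros hermite_cont G_cont)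
  qed
  also have "integral\<^sup>L lborel f = complex_of_real (2 * real n * (1 - c/2)) * J c w (n - 1) + w * J c w n
           - complex_of_real (c/2) * J c w (Suc n)"
    unfolding fe J_def
    by (simp add: iHG Bochner_Integration.integral_diff Bochner_Integration.integral_add
        Bochner_Integration.integrable_diff Bochner_Integration.integrable_add)
  finally show ?thesis by simp
qed

lemma J_Suc:
  assumes c: "c > 0"
  shows "J c w (Suc n) = (2 * w / complex_of_real c) * J c w n + complex_of_real (2 * real n * (2/c - 1)) * J c w (n - 1)"
proof -
  have hyp: "complex_of_real (c/2) * J c w (Suc n) = complex_of_real (2 * real n * (1 - c/2)) * J c w (n - 1) + w * J c w n"
    using J_rel[OF c, of n w] by (simp add: algebra_simps)
  have "J c w (Suc n) = (2 / complex_of_real c) * (complex_of_real (c/2) * J c w (Suc n))"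
    using c by (simp add: field_simps)
  also have "\<dots> = (2 / complex_of_real c) * (complex_of_real (2 * real n * (1 - c/2)) * J c w (n - 1) + w * J c w n)"
    by (simp only: hyp)
  also have "\<dots> = (2 * w / complex_of_real c) * J c w n + complex_of_real (2 * real n * (2/c - 1)) * J c w (n - 1)"
    using c by (simp add: field_simps)
  finally show ?thesis .
qed

fun Rh :: "complex \<Rightarrow> real \<Rightarrow> nat \<Rightarrow> complex" where
  "Rh p q 0 = 1"
| "Rh p q (Suc 0) = p"
| "Rh p q (Suc (Suc n)) = p * Rh p q (Suc n) + complex_of_real (2 * real (Suc n) * q) * Rh p q n"

lemma J_Rh:
  assumes c: "c > 0"
  shows "J c w n = Rh (2 * w / complex_of_real c) (2/c - 1) n * J c w 0"
proof (induction n rule: nat_less_induct)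
  case (1 n)
  show ?case
  proof (cases n)
    case 0 then show ?thesis by simp
  next
    case (Suc m)
    show ?thesis
    proof (cases m)
      case 0 then show ?thesis using Suc J_Suc[OF c, of w 0] by simp
    next
      case (Suc k)
      have "J c w n = (2 * w / complex_of_real c) * J c w (Suc k) + complex_of_real (2 * real (Suc k) * (2/c - 1)) * J c w k"
        using J_Suc[OF c, of w "Suc k"] \<open>n = Suc m\<close> Suc by simp
      also have "\<dots> = Rh (2 * w / complex_of_real c) (2/c - 1) n * J c w 0"
      proof -
        have "Suc k < n" "k < n" using \<open>n = Suc m\<close> Suc by auto
        then have i1: "J c w (Suc k) = Rh (2 * w / complex_of_real c) (2/c - 1) (Suc k) * J c w 0"
          and i0: "J c w k = Rh (2 * w / complex_of_real c) (2/c - 1) k * J c w 0"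
          using 1 by blast+
        show ?thesis unfolding i1 i0 using \<open>n = Suc m\<close> Suc by (simp add: algebra_simps)
      qed
      finally show ?thesis .
    qed
  qed
qed

lemma Rh_bound:
  fixes q s :: real
  assumes s: "s \<ge> 0" and sq: "2 * real N * \<bar>q\<bar> \<le> s^2"
  shows "j \<le> N \<Longrightarrow> norm (Rh p q j) \<le> (norm p + s)^j"
proof (induction j rule: nat_less_induct)
  case (1 j)
  show ?case
  proof (cases j)
    case 0 then show ?thesis by simp
  next
    case (Suc m)
    show ?thesis
    proof (cases m)
      case 0 then show ?thesis using Suc s by simp
    next
      case (Suc k)
      let ?u = "norm p"
      have jk: "j = Suc (Suc k)" using \<open>j = Suc m\<close> Suc by simp
      have i1: "norm (Rh p q (Suc k)) \<le> (?u + s)^(Suc k)" using 1 jk by auto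
      have i0: "norm (Rh p q k) \<le> (?u + s)^k" using 1 jk by auto
      have kq: "2 * real (Suc k) * \<bar>q\<bar> \<le> s^2"
      proof -
        have "2 * real (Suc k) * \<bar>q\<bar> \<le> 2 * real N * \<bar>q\<bar>"
          using 1(2) jk by (intro mult_right_mono) auto
        then show ?thesis using sq by linarith
      qed
      have "norm (Rh p q j) \<le> ?u * norm (Rh p q (Suc k)) + 2 * real (Suc k) * \<bar>q\<bar> * norm (Rh p q k)"
      proof -
        have nq: "norm (complex_of_real (2 * real (Suc k) * q)) = 2 * real (Suc k) * \<bar>q\<bar>"
          by (simp only: norm_of_real) (simp add: abs_mult)
        show ?thesis unfolding jk Rh.simps
          by (rule order_trans[OF norm_triangle_ineq]) (simp only: norm_mult nq order_refl)
      qed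
      also have "\<dots> \<le> ?u * (?u + s)^(Suc k) + s^2 * (?u + s)^k"
        by (intro add_mono mult_left_mono mult_mono i1 i0 kq) auto
      also have "\<dots> \<le> (?u + s)^j"
      proof -
        have "?u * (?u + s)^(Suc k) + s^2 * (?u + s)^k = (?u * (?u + s) + s^2) * (?u + s)^k"
          by (simp add: algebra_simps)
        also have "\<dots> \<le> (?u + s)^2 * (?u + s)^k"
          by (intro mult_right_mono) (use s in \<open>auto simp: power2_eq_square algebra_simps\<close>)
        also have "\<dots> = (?u + s)^j" by (simp add: jk power2_eq_square)
        finally show ?thesis .
      qed
      finally show ?thesis .
    qed
  qed
qed

lemma pow_sum_le:
  fixes x y :: real assumes x: "x \<ge> 0" and y: "y \<ge> 0"
  shows "(x + y)^(Suc n) \<le> 2^n * (x^(Suc n) + y^(Suc n))"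
proof (induction n)
  case 0 then show ?case by simp
next
  case (Suc n)
  have key: "(x + y) * (x^(Suc n) + y^(Suc n)) \<le> 2 * (x^(Suc (Suc n)) + y^(Suc (Suc n)))"
  proof -
    have "0 \<le> (x - y) * (x^(Suc n) - y^(Suc n))"
    proof (cases "x \<le> y")
      case True
      then have "x^(Suc n) \<le> y^(Suc n)" using x by (intro power_mono) auto
      then show ?thesis using True by (intro mult_nonpos_nonpos) auto
    next
      case False
      then have "y^(Suc n) \<le> x^(Suc n)" using y by (intro power_mono) auto
      then show ?thesis using False by (intro mult_nonneg_nonneg) auto
    qed
    then show ?thesis by (simp add: algebra_simps)
  qed
  have "(x + y)^(Suc (Suc n)) = (x + y) * (x + y)^(Suc n)" by simp
  also have "\<dots> \<le> (x + y) * (2^n * (x^(Suc n) + y^(Suc n)))"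
    using Suc x y by (intro mult_left_mono) auto
  also have "\<dots> = 2^n * ((x + y) * (x^(Suc n) + y^(Suc n)))" by simp
  also have "\<dots> \<le> 2^n * (2 * (x^(Suc (Suc n)) + y^(Suc (Suc n))))"
    by (intro mult_left_mono key) auto
  also have "\<dots> = 2^(Suc n) * (x^(Suc (Suc n)) + y^(Suc (Suc n)))" by simp
  finally show ?case .
qed

lemma Rh_gen_bound:
  fixes q b1 b2 :: real
  assumes p: "norm p \<le> 2 * (b1 + b2)" and b1: "b1 \<ge> 0" and b2: "b2 \<ge> 0"
  shows "norm (Rh p q n) \<le> 4^n * (1 + real n / 2) *
    ((sqrt 2 ^ n * sqrt (real n) ^ n * sqrt \<bar>q\<bar> ^ n + 2 powr (real n - 1) * b1^n)
     + (if n = 0 then 0 else 2 powr (real n - 1) * b2^n))"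
proof (cases n)
  case 0 then show ?thesis by simp
next
  case (Suc m)
  define s where "s = sqrt (2 * real n * \<bar>q\<bar>)"
  have s0: "s \<ge> 0" by (simp add: s_def)
  have sn: "s^n = sqrt 2 ^ n * sqrt (real n) ^ n * sqrt \<bar>q\<bar> ^ n"
    by (simp add: s_def real_sqrt_mult power_mult_distrib)
  have p2: "2 powr (real n - 1) = 2^m" using Suc by (simp add: powr_realpow[symmetric] powr_diff)
  have "norm (Rh p q n) \<le> (norm p + s)^n"
    by (rule Rh_bound[OF s0, of n]) (auto simp: s_def)
  also have "\<dots> \<le> 2^m * ((norm p)^n + s^n)"
    using pow_sum_le[of "norm p" s m] s0 Suc by simp
  also have "(norm p)^n \<le> (2 * (b1 + b2))^n"
    by (intro power_mono p) auto
  also have "(2 * (b1 + b2))^n = 2^n * (b1 + b2)^n" by (rule power_mult_distrib)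
  also have "(b1 + b2)^n \<le> 2^m * (b1^n + b2^n)"
    using pow_sum_le[OF b1 b2, of m] Suc by simp
  finally have "norm (Rh p q n) \<le> 2^m * (2^n * (2^m * (b1^n + b2^n)) + s^n)"
    by (simp add: mult_left_mono)
  also have "\<dots> = 2^m * s^n + 2^(n + m) * (2^m * b1^n) + 2^(n + m) * (2^m * b2^n)"
    by (simp add: algebra_simps power_add)
  also have "\<dots> \<le> 4^n * s^n + 4^n * (2^m * b1^n) + 4^n * (2^m * b2^n)"
  proof -
    have a: "(2::real)^m \<le> 4^n"
    proof -
      have "(2::real)^m \<le> 2^n" using Suc by (intro power_increasing) auto
      also have "\<dots> \<le> 4^n" by (intro power_mono) auto
      finally show ?thesis .
    qed
    have b: "(2::real)^(n + m) \<le> 4^n"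
    proof -
      have "(2::real)^(n+m) \<le> 2^(n+n)" using Suc by (intro power_increasing) auto
      also have "\<dots> = 4^n" by (simp add: power_add[symmetric] mult_2[symmetric] power_mult)
      finally show ?thesis .
    qed
    show ?thesis using a b s0 b1 b2
      by (intro add_mono mult_right_mono) auto
  qed
  also have "\<dots> \<le> 4^n * (1 + real n / 2) * (s^n + 2^m * b1^n + 2^m * b2^n)"
  proof -
    have "4^n * s^n + 4^n * (2^m * b1^n) + 4^n * (2^m * b2^n) = 4^n * 1 * (s^n + 2^m * b1^n + 2^m * b2^n)"
      by (simp add: algebra_simps)
    also have "\<dots> \<le> 4^n * (1 + real n / 2) * (s^n + 2^m * b1^n + 2^m * b2^n)"
      using s0 b1 b2 by (intro mult_right_mono mult_left_mono) auto
    finally show ?thesis .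
  qed
  finally have fin: "norm (Rh p q n) \<le> 4^n * (1 + real n / 2) * (s^n + 2^m * b1^n + 2^m * b2^n)" .
  have nz: "n \<noteq> 0" using Suc by simp
  show ?thesis unfolding sn[symmetric] p2 using fin nz by (simp add: add.assoc)
qed

lemma exp_sq:
  fixes x :: real assumes x: "x \<ge> 0" shows "(1 + x/2)^2 \<le> exp x"
proof -
  have "(1 + x/2)^2 \<le> exp (x/2) ^ 2"
    by (rule power_mono) (use x exp_ge_add_one_self[of "x/2"] in auto)
  also have "exp (x/2) ^ 2 = exp (x/2 + x/2)" unfolding power2_eq_square by (rule exp_add[symmetric])
  also have "x/2 + x/2 = x" by simp
  finally show ?thesis .
qed

lemma key_ineq:
  fixes a :: real assumes a: "a > 0" shows "4 * a * exp a \<le> exp (4*a) - 1"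
proof -
  have e3: "(1 + (3*a)/2)^2 \<le> exp (3*a)" using a by (intro exp_sq) auto
  have e1: "1 + a \<le> exp a" by (rule exp_ge_add_one_self)
  have pos: "0 \<le> 1 - a + 9/4*a^2"
  proof -
    show ?thesis
    proof (cases "a \<le> 1")
      case True
      have "0 \<le> a^2" by simp
      then show ?thesis using True by linarith
    next
      case False
      then have "a * 1 \<le> a * a" using a by (intro mult_left_mono) auto
      then have "a \<le> a * a" by simp
      then show ?thesis unfolding power2_eq_square using a by linarith
    qed
  qed
  have "1 \<le> (1 + a) * (1 - a + 9/4*a^2)"
  proof -
    have "(1 + a) * (1 - a + 9/4*a^2) = 1 + 5/4 * a^2 + 9/4 * a^3"
      by (simp add: power2_eq_square power3_eq_cube algebra_simps)
    moreover have "0 \<le> a^2" "0 \<le> a^3" using a by simp_all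
    ultimately show ?thesis by linarith
  qed
  also have "\<dots> \<le> exp a * (1 - a + 9/4*a^2)" by (intro mult_right_mono e1 pos)
  finally have A: "1 \<le> exp a * (1 - a + 9/4*a^2)" .
  have "exp (4*a) = exp (a + 3*a)" by simp
  also have "\<dots> = exp a * exp (3*a)" by (rule exp_add)
  also have "\<dots> \<ge> exp a * (1 + (3*a)/2)^2" by (intro mult_left_mono e3) auto
  finally have B: "exp a * (1 + (3*a)/2)^2 \<le> exp (4*a)" .
  have "4 * a * exp a + 1 \<le> 4 * a * exp a + exp a * (1 - a + 9/4*a^2)" using A by linarith
  also have "\<dots> = exp a * (1 + (3*a)/2)^2" by (simp add: power2_eq_square algebra_simps)
  finally show ?thesis using B by linarith
qed

lemma sum_gauss1:
  fixes a :: real assumes a: "a > 0"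
  shows "summable (\<lambda>k. exp (-a * (real (Suc k))^2))"
    "(\<Sum>k. exp (-a * (real (Suc k))^2)) \<le> exp (-a) * (1 + 1/(4*a))"
proof -
  define f where "f k = exp (-a * (real (Suc k))^2)" for k
  define q where "q = exp (-4*a)"
  have q: "0 < q" "q < 1" using a by (auto simp: q_def)
  have fb: "f k \<le> exp (-a) ^ (Suc k)" for k
  proof -
    have "-a * (real (Suc k))^2 \<le> real (Suc k) * (-a)"
    proof -
      have "real (Suc k) \<le> (real (Suc k))^2" by (simp add: power2_eq_square)
      then have "a * real (Suc k) \<le> a * (real (Suc k))^2" using a by (intro mult_left_mono) auto
      then show ?thesis by (simp add: algebra_simps)
    qed
    then show ?thesis unfolding f_def exp_of_nat_mult[symmetric] by simp
  qed
  have sg: "summable (\<lambda>k. exp (-a) ^ (Suc k))" using a by simp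
  have nb: "norm (f k) \<le> exp (-a) ^ (Suc k)" for k
  proof -
    have "norm (f k) = f k" by (simp add: f_def)
    then show ?thesis using fb[of k] by linarith
  qed
  have sf: "summable f"
    by (rule summable_comparison_test'[OF sg]) (rule nb)
  then show "summable (\<lambda>k. exp (-a * (real (Suc k))^2))" unfolding f_def[abs_def] .
  have fb2: "f (Suc k) \<le> q * q^k" for k
  proof -
    have "-a * (real (Suc (Suc k)))^2 \<le> real (Suc k) * (-4*a)"
    proof -
      have "4 * real (Suc k) \<le> (real (Suc (Suc k)))^2" by (simp add: power2_eq_square algebra_simps)
      then have "a * (4 * real (Suc k)) \<le> a * (real (Suc (Suc k)))^2" using a by (intro mult_left_mono) auto
      then show ?thesis by (simp add: algebra_simps)
    qed
    then have "f (Suc k) \<le> q ^ (Suc k)" unfolding f_def q_def exp_of_nat_mult[symmetric] by simp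
    then show ?thesis by simp
  qed
  have sq: "summable (\<lambda>k. q * q^k)" using q by (intro summable_mult) simp
  have sf2: "summable (\<lambda>k. f (Suc k))" using sf by (simp add: summable_Suc_iff)
  have split: "suminf f = f 0 + (\<Sum>k. f (Suc k))" using suminf_split_head[OF sf] by simp
  have t1: "(\<Sum>k. f (Suc k)) \<le> (\<Sum>k. q * q^k)" by (rule suminf_le[OF fb2 sf2 sq])
  have t2: "(\<Sum>k. q * q^k) = q / (1 - q)" using q by (simp add: suminf_mult suminf_geometric)
  have t3: "q / (1 - q) = 1 / (exp (4*a) - 1)"
  proof -
    have E: "exp (4*a) * q = 1" by (simp add: q_def exp_add[symmetric])
    have E1: "exp (4*a) - 1 \<noteq> 0" using a by simp
    have "q * (exp (4*a) - 1) = 1 - q" using E by (simp add: algebra_simps)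
    then show ?thesis using q E1 by (simp add: field_simps)
  qed
  have t4: "1 / (exp (4*a) - 1) \<le> exp (-a) / (4*a)"
  proof -
    have pos: "exp (4*a) - 1 > 0" using a by simp
    have "4 * a * exp a \<le> exp (4*a) - 1" by (rule key_ineq[OF a])
    then have "4 * a * exp a * exp (-a) \<le> (exp (4*a) - 1) * exp (-a)" by (intro mult_right_mono) auto
    moreover have "4 * a * exp a * exp (-a) = 4 * a" by (simp add: mult.assoc exp_add[symmetric])
    ultimately have "4 * a \<le> (exp (4*a) - 1) * exp (-a)" by linarith
    then show ?thesis using a pos by (simp add: divide_simps mult.commute)
  qed
  have f0: "f 0 = exp (-a)" by (simp add: f_def)
  have "suminf f \<le> exp (-a) + exp (-a) / (4*a)" using split t1 t2 t3 t4 f0 by linarith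
  also have "\<dots> = exp (-a) * (1 + 1/(4*a))" by (simp add: distrib_left)
  finally show "(\<Sum>k. exp (-a * (real (Suc k))^2)) \<le> exp (-a) * (1 + 1/(4*a))"
    unfolding f_def[abs_def] .
qed

lemma sum_gauss2:
  fixes a :: real assumes n: "n \<ge> 1" and a: "a \<ge> real n"
  shows "summable (\<lambda>k. real (Suc k)^n * exp (-a * (real (Suc k))^2))"
    "(\<Sum>k. real (Suc k)^n * exp (-a * (real (Suc k))^2)) \<le> exp (-a) * (3/2)"
proof -
  define f where "f k = real (Suc k)^n * exp (-a * (real (Suc k))^2)" for k
  have fb: "f k \<le> exp (-a) * exp (-2) ^ k" for k
  proof -
    define K where "K = real k"
    have K0: "K \<ge> 0" by (simp add: K_def)
    have KK: "K \<le> K^2"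
    proof (cases "k = 0")
      case True then show ?thesis by (simp add: K_def)
    next
      case False then have "1 \<le> K" by (simp add: K_def)
      then show ?thesis by (simp add: power2_eq_square)
    qed
    define B where "B = (K + 1) * exp (-(K^2 + 2*K))"
    have B0: "0 \<le> B" using K0 by (simp add: B_def)
    have B1: "B \<le> exp (-2*K)"
    proof -
      have "B \<le> exp K * exp (-(K^2 + 2*K))"
      proof -
        have "K + 1 \<le> exp K" using exp_ge_add_one_self[of K] by linarith
        then show ?thesis unfolding B_def by (intro mult_right_mono) auto
      qed
      also have "\<dots> = exp (-(K^2) - K)" by (simp add: exp_add[symmetric])
      also have "\<dots> \<le> exp (-2*K)" using KK by simp
      finally show ?thesis .
    qed
    have "exp (-2*K) \<le> 1" using K0 by simp
    then have Ble1: "B \<le> 1" using B1 by linarith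
    have feq: "f k = exp (-a) * ((K + 1)^n * exp (-a * (K^2 + 2*K)))"
      unfolding f_def K_def by (simp add: exp_add[symmetric] power2_eq_square algebra_simps)
    have "(K + 1)^n * exp (-a * (K^2 + 2*K)) \<le> (K + 1)^n * exp (- real n * (K^2 + 2*K))"
    proof -
      have "- a * (K^2 + 2*K) \<le> - real n * (K^2 + 2*K)" using a K0 by (intro mult_right_mono) auto
      then show ?thesis by (intro mult_left_mono) (use K0 in auto)
    qed
    also have "\<dots> = B ^ n"
    proof -
      have e: "- real n * (K^2 + 2*K) = real n * (-(K^2 + 2*K))" by (simp add: algebra_simps)
      have "exp (- real n * (K^2 + 2*K)) = exp (-(K^2 + 2*K)) ^ n"
        unfolding e by (rule exp_of_nat_mult)
      then show ?thesis unfolding B_def by (simp add: power_mult_distrib)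
    qed
    also have "\<dots> \<le> B ^ 1" by (rule power_decreasing[OF n B0 Ble1])
    also have "\<dots> \<le> exp (-2) ^ k" using B1 by (simp add: K_def exp_of_nat_mult[symmetric] mult.commute)
    finally have X: "(K + 1)^n * exp (-a * (K^2 + 2*K)) \<le> exp (-2) ^ k" .
    show ?thesis unfolding feq by (intro mult_left_mono X) auto
  qed
  have e2: "exp (-2::real) < 1" by simp
  have sg: "summable (\<lambda>k. exp (-a) * exp (-2::real) ^ k)" using e2 by (intro summable_mult) simp
  have f0: "0 \<le> f k" for k by (simp add: f_def)
  have nb: "norm (f k) \<le> exp (-a) * exp (-2::real) ^ k" for k
  proof -
    have "norm (f k) = f k" using f0[of k] by simp
    then show ?thesis using fb[of k] by linarith
  qed
  have sf: "summable f"
    by (rule summable_comparison_test'[OF sg]) (rule nb)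
  then show "summable (\<lambda>k. real (Suc k)^n * exp (-a * (real (Suc k))^2))" unfolding f_def[abs_def] .
  have "suminf f \<le> (\<Sum>k. exp (-a) * exp (-2::real) ^ k)" by (rule suminf_le[OF fb sf sg])
  also have "\<dots> = exp (-a) * (1 / (1 - exp (-2)))" using e2 by (simp add: suminf_mult suminf_geometric)
  also have "\<dots> \<le> exp (-a) * (3/2)"
  proof -
    have "3 \<le> exp (2::real)" using exp_ge_add_one_self[of "2::real"] by simp
    then have "exp (-2::real) \<le> 1/3" by (simp add: exp_minus field_simps)
    then have "1 / (1 - exp (-2::real)) \<le> 3/2" using e2 by (simp add: field_simps)
    then show ?thesis by (intro mult_left_mono) auto
  qed
  finally show "(\<Sum>k. real (Suc k)^n * exp (-a * (real (Suc k))^2)) \<le> exp (-a) * (3/2)" unfolding f_def[abs_def] .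
qed

lemma G_split: "G c (Complex b \<theta>) x = complex_of_real (exp (-c*x^2/2 + b*x)) * exp (\<i> * complex_of_real (\<theta>*x))"
proof -
  have "complex_of_real (-c*x^2/2) + Complex b \<theta> * complex_of_real x
      = complex_of_real (-c*x^2/2 + b*x) + \<i> * complex_of_real (\<theta>*x)"
    by (simp add: complex_eq_iff)
  then show ?thesis unfolding G_def by (simp only: exp_add exp_of_real)
qed

lemma coeff_formula:
  fixes \<mu> \<sigma> L \<epsilon> c s :: real
  assumes sig: "\<sigma> > 0" and c: "c = (\<sigma>\<^sup>2 + 1) / \<sigma>\<^sup>2"
  shows "gauss_fourier_coeff n \<mu> \<sigma> L \<epsilon> s m =
    complex_of_real (exp (- \<mu>\<^sup>2 / (2 * \<sigma>\<^sup>2)) / sqrt (sqrt pi * 2 ^ n * fact n)) *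
    J c (Complex (\<mu> / \<sigma>\<^sup>2) (s * (2 * pi / L) * real m / \<epsilon>)) n"
proof -
  define D where "D = sqrt (sqrt pi * 2 ^ n * fact n)"
  define \<theta> where "\<theta> = s * (2 * pi / L) * real m / \<epsilon>"
  have pw: "complex_of_real (hermite_fun n x * exp (- (x - \<mu>)\<^sup>2 / (2 * \<sigma>\<^sup>2))) *
        exp (\<i> * complex_of_real (s * (2 * pi / L) * real m * (x / \<epsilon>)))
     = complex_of_real (exp (- \<mu>\<^sup>2 / (2 * \<sigma>\<^sup>2)) / D) *
        (complex_of_real (hermite n x) * G c (Complex (\<mu> / \<sigma>\<^sup>2) \<theta>) x)" for x
  proof -
    have r1: "hermite_fun n x * exp (- (x - \<mu>)\<^sup>2 / (2 * \<sigma>\<^sup>2)) =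
        hermite n x / D * exp (- x\<^sup>2 / 2 + - (x - \<mu>)\<^sup>2 / (2 * \<sigma>\<^sup>2))"
      unfolding hermite_fun_def D_def exp_add by (simp add: algebra_simps)
    have r2: "- x\<^sup>2 / 2 + - (x - \<mu>)\<^sup>2 / (2 * \<sigma>\<^sup>2) = - \<mu>\<^sup>2 / (2 * \<sigma>\<^sup>2) + (-c*x^2/2 + \<mu> / \<sigma>\<^sup>2 * x)"
      using sig unfolding c by (simp add: field_simps power2_eq_square)
    have r3: "s * (2 * pi / L) * real m * (x / \<epsilon>) = \<theta> * x" by (simp add: \<theta>_def)
    show ?thesis
      unfolding r1 r2 r3 G_split exp_add
      by (simp add: algebra_simps)
  qed
  show ?thesis
    unfolding gauss_fourier_coeff_def J_def pw \<theta>_def[symmetric] D_def[symmetric]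
    by (rule integral_mult_right_zero)
qed

lemma Rh_zero: "Rh p 0 n = p ^ n"
  by (induction p "0::real" n rule: Rh.induct) auto

lemma norm_J0:
  assumes c: "c > 0"
  shows "norm (J c (Complex b \<theta>) 0) = sqrt (2*pi/c) * exp (b^2/(2*c)) * exp (-(\<theta>^2/(2*c)))"
proof -
  have "J c (Complex b \<theta>) 0 = complex_of_real (sqrt (2*pi/c)) * exp ((Complex b \<theta>)^2 / (2*c))"
    unfolding J_def using G_integral(2)[OF c] by simp
  then have "norm (J c (Complex b \<theta>) 0) = sqrt (2*pi/c) * exp (Re ((Complex b \<theta>)^2 / (2*c)))"
    using c by (simp add: norm_mult norm_exp_eq_Re)
  also have "Re ((Complex b \<theta>)^2 / (2*c)) = b^2/(2*c) + (-(\<theta>^2/(2*c)))"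
    using c by (simp add: power2_eq_square Re_divide field_simps)
  finally show ?thesis by (simp only: exp_add mult.assoc)
qed

lemma const_eq:
  fixes c :: real assumes c: "c > 0"
  shows "sqrt (2*pi/c) / sqrt (sqrt pi * 2^n * fact n) = pi powr (1/4) / sqrt (c * 2 powr (real n - 1) * fact n)"
proof -
  have p2: "2 powr (real n - 1) = 2^n / (2::real)"
    by (simp add: powr_diff powr_realpow)
  have pp: "pi powr (1/4) = sqrt (sqrt pi)"
  proof -
    have "pi powr (1/4) = (pi powr (1/2)) powr (1/2)" by (simp add: powr_powr)
    then show ?thesis by (simp add: powr_half_sqrt)
  qed
  have sp: "sqrt pi * sqrt pi = pi" by simp
  have spos: "sqrt pi > 0" by simp
  have "sqrt (2*pi/c) / sqrt (sqrt pi * 2^n * fact n) = sqrt ((2*pi/c) / (sqrt pi * 2^n * fact n))"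
    by (simp add: real_sqrt_divide real_sqrt_mult)
  also have "(2*pi/c) / (sqrt pi * 2^n * fact n) = sqrt pi / (c * (2^n/2) * fact n)"
  proof -
    have gen: "(2*(r*r)/c)/(r*X) = r/(c*(X/2))" if "r > 0" "X > 0" for r X :: real
      using c that by (simp add: field_simps)
    have X: "(2::real)^n * fact n > 0" by simp
    have "(2*(sqrt pi * sqrt pi)/c)/(sqrt pi*(2^n * fact n)) = sqrt pi/(c*((2^n * fact n)/2))"
      by (rule gen[OF spos X])
    then show ?thesis unfolding sp by (simp add: mult.assoc)
  qed
  also have "sqrt (sqrt pi / (c * (2^n/2) * fact n)) = sqrt (sqrt pi) / sqrt (c * (2^n/2) * fact n)"
    by (rule real_sqrt_divide)
  finally show ?thesis by (simp only: pp p2)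
qed

lemma coef_norm:
  fixes \<mu> \<sigma> L \<epsilon> c s :: real
  assumes sig: "\<sigma> > 0" and c: "c = (\<sigma>\<^sup>2 + 1) / \<sigma>\<^sup>2" and s: "s = 1 \<or> s = -1"
  shows "cmod (gauss_fourier_coeff n \<mu> \<sigma> L \<epsilon> s m) =
    (exp (- \<mu>\<^sup>2 / (2 * \<sigma>\<^sup>2)) / sqrt (sqrt pi * 2 ^ n * fact n)) * sqrt (2*pi/c) * exp ((\<mu>/\<sigma>\<^sup>2)^2/(2*c))
    * exp (- ((2*pi/(L*\<epsilon>))^2/(2*c)) * (real m)^2)
    * cmod (Rh (2 * Complex (\<mu>/\<sigma>\<^sup>2) (s * (2 * pi / L) * real m / \<epsilon>) / complex_of_real c) (2/c - 1) n)"
proof -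
  have cpos: "c > 0" using sig unfolding c by (simp add: field_simps add_pos_nonneg)
  define A0 where "A0 = exp (- \<mu>\<^sup>2 / (2 * \<sigma>\<^sup>2)) / sqrt (sqrt pi * 2 ^ n * fact n)"
  define w where "w = Complex (\<mu>/\<sigma>\<^sup>2) (s * (2 * pi / L) * real m / \<epsilon>)"
  have A0: "A0 \<ge> 0" by (simp add: A0_def)
  have jr: "J c w n = Rh (2 * w / complex_of_real c) (2/c - 1) n * J c w 0" by (rule J_Rh[OF cpos])
  have "gauss_fourier_coeff n \<mu> \<sigma> L \<epsilon> s m = complex_of_real A0 * J c w n"
    unfolding coeff_formula[OF sig c] A0_def w_def ..
  also have "\<dots> = complex_of_real A0 * (Rh (2 * w / complex_of_real c) (2/c - 1) n * J c w 0)"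
    by (simp only: jr)
  finally have "gauss_fourier_coeff n \<mu> \<sigma> L \<epsilon> s m = complex_of_real A0 * (Rh (2 * w / complex_of_real c) (2/c - 1) n * J c w 0)" .
  then have "cmod (gauss_fourier_coeff n \<mu> \<sigma> L \<epsilon> s m) = A0 * cmod (Rh (2 * w / complex_of_real c) (2/c - 1) n) * cmod (J c w 0)"
    using A0 by (simp add: norm_mult)
  also have "cmod (J c w 0) = sqrt (2*pi/c) * exp ((\<mu>/\<sigma>\<^sup>2)^2/(2*c)) * exp (-((s * (2 * pi / L) * real m / \<epsilon>)^2/(2*c)))"
    unfolding w_def by (rule norm_J0[OF cpos])
  also have "(s * (2 * pi / L) * real m / \<epsilon>)^2 = (2*pi/(L*\<epsilon>))^2 * (real m)^2"
  proof -
    have "s^2 = 1" using s by auto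
    then show ?thesis by (simp add: power_mult_distrib power_divide algebra_simps)
  qed
  finally show ?thesis unfolding A0_def w_def by (simp add: algebra_simps)
qed

lemma norm_p_bound:
  fixes c b \<theta> :: real assumes c: "c > 0"
  shows "cmod (2 * Complex b \<theta> / complex_of_real c) \<le> 2 * (\<bar>b\<bar>/c + \<bar>\<theta>\<bar>/c)"
proof -
  have "cmod (2 * Complex b \<theta> / complex_of_real c) = 2 * cmod (Complex b \<theta>) / c"
    using c by (simp add: norm_divide norm_mult)
  also have "\<dots> \<le> 2 * (\<bar>b\<bar> + \<bar>\<theta>\<bar>) / c"
    using cmod_le[of "Complex b \<theta>"] c by (intro divide_right_mono) auto
  finally show ?thesis by (simp add: add_divide_distrib)
qed

lemma sum_comb:
  fixes f e1 e2 :: "nat \<Rightarrow> real"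
  assumes f0: "\<And>k. 0 \<le> f k" and fb: "\<And>k. f k \<le> P * (X * e1 k + Y * e2 k)"
    and P: "P \<ge> 0" and X: "X \<ge> 0" and Y: "Y \<ge> 0"
    and s1: "summable e1" and s2: "summable e2" and E1: "suminf e1 \<le> E1" and E2: "suminf e2 \<le> E2"
  shows "summable f" "suminf f \<le> P * (X * E1 + Y * E2)"
proof -
  have sg: "summable (\<lambda>k. P * (X * e1 k + Y * e2 k))"
    using s1 s2 by (intro summable_mult summable_add) auto
  have nb: "norm (f k) \<le> P * (X * e1 k + Y * e2 k)" for k using f0[of k] fb[of k] by simp
  show sf: "summable f" by (rule summable_comparison_test'[OF sg]) (rule nb)
  have "suminf f \<le> (\<Sum>k. P * (X * e1 k + Y * e2 k))" by (rule suminf_le[OF fb sf sg])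
  also have "\<dots> = P * (X * suminf e1 + Y * suminf e2)"
  proof -
    have "(\<Sum>k. P * (X * e1 k + Y * e2 k)) = P * (\<Sum>k. X * e1 k + Y * e2 k)"
      using s1 s2 by (intro suminf_mult summable_add summable_mult) auto
    also have "(\<Sum>k. X * e1 k + Y * e2 k) = (\<Sum>k. X * e1 k) + (\<Sum>k. Y * e2 k)"
      using s1 s2 by (intro suminf_add[symmetric] summable_mult) auto
    also have "\<dots> = X * suminf e1 + Y * suminf e2"
      using s1 s2 by (simp add: suminf_mult)
    finally show ?thesis .
  qed
  also have "\<dots> \<le> P * (X * E1 + Y * E2)"
    using E1 E2 P X Y by (intro mult_left_mono add_mono) auto
  finally show "suminf f \<le> P * (X * E1 + Y * E2)" .
qed

lemma aux_h1:
  fixes S D R C E1 E2 F G :: real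
  assumes h: "S / D = R / C"
  shows "R * F * G * (E1 * E2) / C = (E1 / D * S * E2) * (F * G)"
proof -
  have "(E1 / D * S * E2) * (F * G) = (S / D) * (E1 * E2 * F * G)" by (simp add: divide_inverse mult_ac)
  also have "\<dots> = R / C * (E1 * E2 * F * G)" by (simp only: h)
  also have "\<dots> = R * F * G * (E1 * E2) / C" by (simp add: divide_inverse mult_ac)
  finally show ?thesis by simp
qed

lemma main_general:
  fixes \<mu> \<sigma> L \<epsilon> c s :: real and n :: nat
  assumes sig: "\<sigma> > 0" and L: "L > 0" and eps: "\<epsilon> > 0"
    and c: "c = (\<sigma>\<^sup>2 + 1) / \<sigma>\<^sup>2"
    and nlt: "real n < 2 * pi\<^sup>2 / (L\<^sup>2 * \<epsilon>\<^sup>2 * c)"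
    and s: "s = 1 \<or> s = -1"
  shows "summable (\<lambda>k. cmod (gauss_fourier_coeff n \<mu> \<sigma> L \<epsilon> s (Suc k))) \<and>
      (\<Sum>k. cmod (gauss_fourier_coeff n \<mu> \<sigma> L \<epsilon> s (Suc k)))
        \<le> (pi powr (1/4) * 4 ^ n * (1 + real n / 2)
             * exp (- \<mu>\<^sup>2 / (2 * \<sigma>\<^sup>2) + \<mu>\<^sup>2 / (2 * c * \<sigma> ^ 4))
             / sqrt (c * 2 powr (real n - 1) * fact n))
           * exp (- 2 * pi\<^sup>2 / (L\<^sup>2 * \<epsilon>\<^sup>2 * c))
           * ((sqrt 2 ^ n * sqrt (real n) ^ n * sqrt \<bar>2 / c - 1\<bar> ^ n
                + 2 powr (real n - 1) * (\<bar>\<mu>\<bar> / (c * \<sigma>\<^sup>2)) ^ n)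
                * (1 + L\<^sup>2 * \<epsilon>\<^sup>2 * c / (4 * pi\<^sup>2))
              + 2 powr (real n - 1) * (2 * pi / (L * \<epsilon> * c)) ^ n
                * (1 + exp (real n - 1) / 2))"
proof -
  have cpos: "c > 0" using sig unfolding c by (simp add: field_simps add_pos_nonneg)
  define \<omega> where "\<omega> = 2 * pi / (L * \<epsilon>)"
  have \<omega>: "\<omega> > 0" using L eps by (simp add: \<omega>_def)
  define a where "a = \<omega>^2 / (2*c)"
  have apos: "a > 0" using \<omega> cpos by (simp add: a_def)
  have ha: "2 * pi\<^sup>2 / (L\<^sup>2 * \<epsilon>\<^sup>2 * c) = a"
    unfolding a_def \<omega>_def using L eps cpos by (simp add: power_divide power_mult_distrib field_simps)
  define b where "b = \<mu> / \<sigma>\<^sup>2"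
  define A0 where "A0 = exp (- \<mu>\<^sup>2 / (2 * \<sigma>\<^sup>2)) / sqrt (sqrt pi * 2 ^ n * fact n)"
  define P where "P = A0 * sqrt (2*pi/c) * exp (b^2/(2*c))"
  have P: "P \<ge> 0" using cpos by (simp add: P_def A0_def)
  define K4 where "K4 = (4::real) ^ n * (1 + real n / 2)"
  have K4: "K4 \<ge> 0" by (simp add: K4_def)
  define A1 where "A1 = sqrt 2 ^ n * sqrt (real n) ^ n * sqrt \<bar>2 / c - 1\<bar> ^ n"
  define X where "X = A1 + 2 powr (real n - 1) * (\<bar>b\<bar>/c) ^ n"
  have X: "X \<ge> 0" using cpos by (simp add: X_def A1_def)
  define Yf where "Yf = 2 powr (real n - 1) * (\<omega>/c) ^ n"
  have Yf: "Yf \<ge> 0" using \<omega> cpos by (simp add: Yf_def)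
  define Y where "Y = (if n = 0 then 0 else Yf)"
  have Y: "Y \<ge> 0" using Yf by (simp add: Y_def)
  define e1 where "e1 k = exp (-a * (real (Suc k))^2)" for k
  define e2 where "e2 k = real (Suc k)^n * exp (-a * (real (Suc k))^2)" for k
  define f where "f k = cmod (gauss_fourier_coeff n \<mu> \<sigma> L \<epsilon> s (Suc k))" for k
  define E1 where "E1 = exp (-a) * (1 + 1/(4*a))"
  define E2 where "E2 = (if n = 0 then E1 else exp (-a) * (3/2))"
  have s1: "summable e1" and E1b: "suminf e1 \<le> E1"
    using sum_gauss1[OF apos] unfolding e1_def[abs_def] E1_def by auto
  have s2: "summable e2 \<and> suminf e2 \<le> E2"
  proof (cases "n = 0")
    case True
    then have "e2 = e1" by (simp add: e1_def[abs_def] e2_def[abs_def])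
    then show ?thesis using s1 E1b True by (simp add: E2_def)
  next
    case False
    then have n1: "n \<ge> 1" by simp
    have "a \<ge> real n" using nlt ha by simp
    then show ?thesis using sum_gauss2[OF n1] False unfolding e2_def[abs_def] E2_def by auto
  qed
  have fb: "f k \<le> (P * K4) * (X * e1 k + Y * e2 k)" for k
  proof -
    define \<theta> where "\<theta> = s * (2 * pi / L) * real (Suc k) / \<epsilon>"
    have th: "\<bar>\<theta>\<bar> = \<omega> * real (Suc k)"
      using s L eps \<omega> by (auto simp: \<theta>_def \<omega>_def abs_mult)
    have fk: "f k = P * e1 k * cmod (Rh (2 * Complex b \<theta> / complex_of_real c) (2/c - 1) n)"
    proof -
      have "-((2*pi/(L*\<epsilon>))^2/(2*c)) * (real (Suc k))^2 = -a * (real (Suc k))^2"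
        by (simp add: a_def \<omega>_def)
      then show ?thesis
        unfolding f_def coef_norm[OF sig c s] P_def A0_def e1_def b_def \<theta>_def by simp
    qed
    have pb: "cmod (2 * Complex b \<theta> / complex_of_real c) \<le> 2 * (\<bar>b\<bar>/c + \<bar>\<theta>\<bar>/c)"
      by (rule norm_p_bound[OF cpos])
    have Rb: "cmod (Rh (2 * Complex b \<theta> / complex_of_real c) (2/c - 1) n) \<le>
       K4 * (X + (if n = 0 then 0 else 2 powr (real n - 1) * (\<bar>\<theta>\<bar>/c)^n))"
      using Rh_gen_bound[OF pb, of "2/c - 1" n] cpos unfolding K4_def X_def A1_def by simp
    also have "(if n = 0 then 0 else 2 powr (real n - 1) * (\<bar>\<theta>\<bar>/c)^n) = Y * real (Suc k)^n"
      unfolding Y_def Yf_def th by (simp add: power_mult_distrib power_divide)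
    finally have Rb2: "cmod (Rh (2 * Complex b \<theta> / complex_of_real c) (2/c - 1) n) \<le> K4 * (X + Y * real (Suc k)^n)" .
    have e1pos: "e1 k \<ge> 0" by (simp add: e1_def)
    have "f k \<le> P * e1 k * (K4 * (X + Y * real (Suc k)^n))"
      unfolding fk using P e1pos by (intro mult_left_mono Rb2) auto
    also have "\<dots> = (P * K4) * (X * e1 k + Y * e2 k)"
      by (simp add: e1_def e2_def algebra_simps)
    finally show ?thesis .
  qed
  have f0: "0 \<le> f k" for k by (simp add: f_def)
  have PK: "P * K4 \<ge> 0" using P K4 by simp
  note sc = sum_comb[OF f0 fb PK X Y s1 conjunct1[OF s2] E1b conjunct2[OF s2]]
  have final: "(P * K4) * (X * E1 + Y * E2) \<le> (P * K4) * (exp (-a) * (X * (1 + 1/(2*a)) + Yf * (1 + exp (real n - 1) / 2)))"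
  proof (intro mult_left_mono PK)
    have t1: "X * E1 \<le> exp (-a) * (X * (1 + 1/(2*a)))"
    proof -
      have "1/(4*a) \<le> 1/(2*a)" using apos by (simp add: frac_le)
      then have "E1 \<le> exp (-a) * (1 + 1/(2*a))" unfolding E1_def by (intro mult_left_mono) auto
      then show ?thesis using X by (simp add: mult_left_mono mult.left_commute)
    qed
    have t2: "Y * E2 \<le> exp (-a) * (Yf * (1 + exp (real n - 1) / 2))"
    proof (cases "n = 0")
      case True
      then show ?thesis using Yf by (simp add: Y_def)
    next
      case False
      then have ge: "exp (real n - 1) \<ge> 1" by simp
      have "E2 = exp (-a) * (3/2)" using False by (simp add: E2_def)
      also have "\<dots> \<le> exp (-a) * (1 + exp (real n - 1) / 2)" using ge by (intro mult_left_mono) auto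
      finally have "E2 \<le> exp (-a) * (1 + exp (real n - 1) / 2)" .
      then show ?thesis using Yf False by (simp add: Y_def mult_left_mono mult.left_commute)
    qed
    show "X * E1 + Y * E2 \<le> exp (-a) * (X * (1 + 1/(2*a)) + Yf * (1 + exp (real n - 1) / 2))"
      using t1 t2 by (simp add: distrib_left)
  qed
  have rhs: "(pi powr (1/4) * 4 ^ n * (1 + real n / 2)
             * exp (- \<mu>\<^sup>2 / (2 * \<sigma>\<^sup>2) + \<mu>\<^sup>2 / (2 * c * \<sigma> ^ 4))
             / sqrt (c * 2 powr (real n - 1) * fact n))
           * exp (- 2 * pi\<^sup>2 / (L\<^sup>2 * \<epsilon>\<^sup>2 * c))
           * ((sqrt 2 ^ n * sqrt (real n) ^ n * sqrt \<bar>2 / c - 1\<bar> ^ n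
                + 2 powr (real n - 1) * (\<bar>\<mu>\<bar> / (c * \<sigma>\<^sup>2)) ^ n)
                * (1 + L\<^sup>2 * \<epsilon>\<^sup>2 * c / (4 * pi\<^sup>2))
              + 2 powr (real n - 1) * (2 * pi / (L * \<epsilon> * c)) ^ n
                * (1 + exp (real n - 1) / 2))
     = (P * K4) * (exp (-a) * (X * (1 + 1/(2*a)) + Yf * (1 + exp (real n - 1) / 2)))"
  proof -
    have h1: "pi powr (1/4) * 4 ^ n * (1 + real n / 2)
             * exp (- \<mu>\<^sup>2 / (2 * \<sigma>\<^sup>2) + \<mu>\<^sup>2 / (2 * c * \<sigma> ^ 4))
             / sqrt (c * 2 powr (real n - 1) * fact n) = P * K4"
    proof -
      have bb: "b^2/(2*c) = \<mu>\<^sup>2 / (2 * c * \<sigma> ^ 4)"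
      proof -
        have s4: "\<sigma> ^ 4 = \<sigma>\<^sup>2 * \<sigma>\<^sup>2" by (simp add: power_add[symmetric])
        show ?thesis unfolding b_def s4 by (simp add: power_divide power2_eq_square field_simps)
      qed
      show ?thesis
        unfolding exp_add bb[symmetric] P_def A0_def K4_def
        by (rule aux_h1[OF const_eq[OF cpos]])
    qed
    have h2a: "- 2 * pi\<^sup>2 / (L\<^sup>2 * \<epsilon>\<^sup>2 * c) = -a" using ha by simp
    have h2: "exp (- 2 * pi\<^sup>2 / (L\<^sup>2 * \<epsilon>\<^sup>2 * c)) = exp (-a)" unfolding h2a ..
    have h3: "\<bar>\<mu>\<bar> / (c * \<sigma>\<^sup>2) = \<bar>b\<bar>/c" unfolding b_def using sig by (simp add: abs_divide)
    have h4a: "1/(2*a) = L\<^sup>2 * \<epsilon>\<^sup>2 * c / (4 * pi\<^sup>2)"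
      unfolding ha[symmetric] using L eps cpos by (simp add: field_simps)
    have h4: "1 + L\<^sup>2 * \<epsilon>\<^sup>2 * c / (4 * pi\<^sup>2) = 1 + 1/(2*a)" unfolding h4a ..
    have h5: "2 * pi / (L * \<epsilon> * c) = \<omega>/c" unfolding \<omega>_def by simp
    show ?thesis unfolding h1 h2 h3 h4 h5 X_def[symmetric] A1_def[symmetric] Yf_def[symmetric]
      by (simp add: algebra_simps)
  qed
  have S: "summable (\<lambda>k. cmod (gauss_fourier_coeff n \<mu> \<sigma> L \<epsilon> s (Suc k)))"
    using sc(1) unfolding f_def[abs_def] .
  have T: "(\<Sum>k. cmod (gauss_fourier_coeff n \<mu> \<sigma> L \<epsilon> s (Suc k)))
     \<le> (P * K4) * (exp (-a) * (X * (1 + 1/(2*a)) + Yf * (1 + exp (real n - 1) / 2)))"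
    using order_trans[OF sc(2) final] unfolding f_def[abs_def] .
  show ?thesis unfolding rhs using S T by (rule conjI)
qed

lemma aux_h1b:
  fixes S D R C E1 E2 F :: real
  assumes h: "S / D = R / C"
  shows "R * F * (E1 * E2) / C = (E1 / D * S * E2) * F"
proof -
  have "(E1 / D * S * E2) * F = (S / D) * (E1 * E2 * F)" by (simp add: divide_inverse mult_ac)
  also have "\<dots> = R / C * (E1 * E2 * F)" by (simp only: h)
  also have "\<dots> = R * F * (E1 * E2) / C" by (simp add: divide_inverse mult_ac)
  finally show ?thesis by simp
qed

lemma pow_sum_le_powr:
  fixes x y :: real assumes x: "x \<ge> 0" and y: "y \<ge> 0"
  shows "(x + y)^n \<le> 2 powr (real n - 1) * (x^n + y^n)"
proof (cases n)
  case 0 then show ?thesis by (simp add: powr_minus)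
next
  case (Suc m)
  have "2 powr (real n - 1) = 2^m" using Suc by (simp add: powr_realpow[symmetric] powr_diff)
  then show ?thesis using pow_sum_le[OF x y, of m] Suc by simp
qed

lemma main_one:
  fixes \<mu> \<sigma> L \<epsilon> c s :: real and n :: nat
  assumes sig: "\<sigma> > 0" and L: "L > 0" and eps: "\<epsilon> > 0"
    and c: "c = (\<sigma>\<^sup>2 + 1) / \<sigma>\<^sup>2"
    and nlt: "real n < 2 * pi\<^sup>2 / (L\<^sup>2 * \<epsilon>\<^sup>2 * c)"
    and s: "s = 1 \<or> s = -1"
    and one: "\<sigma>\<^sup>2 = 1"
  shows "summable (\<lambda>k. cmod (gauss_fourier_coeff n \<mu> \<sigma> L \<epsilon> s (Suc k))) \<and>
      (\<Sum>k. cmod (gauss_fourier_coeff n \<mu> \<sigma> L \<epsilon> s (Suc k)))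
        \<le> pi powr (1/4) * 2 powr (real n - 1) * exp (- \<mu>\<^sup>2 / 4) / sqrt (2 ^ n * fact n)
           * exp (- pi\<^sup>2 / (L\<^sup>2 * \<epsilon>\<^sup>2))
           * (\<bar>\<mu>\<bar> ^ n * (1 + L\<^sup>2 * \<epsilon>\<^sup>2 / (2 * pi\<^sup>2))
              + (2 * pi / (L * \<epsilon>)) ^ n * (1 + exp (real n - 1) / 2))"
proof -
  have c2: "c = 2" using one unfolding c by simp
  have cpos: "c > 0" using c2 by simp
  define \<omega> where "\<omega> = 2 * pi / (L * \<epsilon>)"
  have \<omega>: "\<omega> > 0" using L eps by (simp add: \<omega>_def)
  define a where "a = \<omega>^2 / (2*c)"
  have apos: "a > 0" using \<omega> cpos by (simp add: a_def)
  have ha: "2 * pi\<^sup>2 / (L\<^sup>2 * \<epsilon>\<^sup>2 * c) = a"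
    unfolding a_def \<omega>_def using L eps cpos by (simp add: power_divide power_mult_distrib field_simps)
  have ha2: "pi\<^sup>2 / (L\<^sup>2 * \<epsilon>\<^sup>2) = a" using ha c2 by (simp add: field_simps)
  define b where "b = \<mu> / \<sigma>\<^sup>2"
  have bmu: "b = \<mu>" using one by (simp add: b_def)
  define A0 where "A0 = exp (- \<mu>\<^sup>2 / (2 * \<sigma>\<^sup>2)) / sqrt (sqrt pi * 2 ^ n * fact n)"
  define P where "P = A0 * sqrt (2*pi/c) * exp (b^2/(2*c))"
  have P: "P \<ge> 0" using cpos by (simp add: P_def A0_def)
  define K2 where "K2 = (2::real) powr (real n - 1)"
  have K2: "K2 \<ge> 0" by (simp add: K2_def)
  define X where "X = \<bar>\<mu>\<bar> ^ n"
  have X: "X \<ge> 0" by (simp add: X_def)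
  define Y where "Y = \<omega> ^ n"
  have Y: "Y \<ge> 0" using \<omega> by (simp add: Y_def)
  define e1 where "e1 k = exp (-a * (real (Suc k))^2)" for k
  define e2 where "e2 k = real (Suc k)^n * exp (-a * (real (Suc k))^2)" for k
  define f where "f k = cmod (gauss_fourier_coeff n \<mu> \<sigma> L \<epsilon> s (Suc k))" for k
  define E1 where "E1 = exp (-a) * (1 + 1/(4*a))"
  define E2 where "E2 = (if n = 0 then E1 else exp (-a) * (3/2))"
  have s1: "summable e1" and E1b: "suminf e1 \<le> E1"
    using sum_gauss1[OF apos] unfolding e1_def[abs_def] E1_def by auto
  have s2: "summable e2 \<and> suminf e2 \<le> E2"
  proof (cases "n = 0")
    case True
    then have "e2 = e1" by (simp add: e1_def[abs_def] e2_def[abs_def])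
    then show ?thesis using s1 E1b True by (simp add: E2_def)
  next
    case False
    then have n1: "n \<ge> 1" by simp
    have "a \<ge> real n" using nlt ha by simp
    then show ?thesis using sum_gauss2[OF n1] False unfolding e2_def[abs_def] E2_def by auto
  qed
  have fb: "f k \<le> (P * K2) * (X * e1 k + Y * e2 k)" for k
  proof -
    define \<theta> where "\<theta> = s * (2 * pi / L) * real (Suc k) / \<epsilon>"
    have th: "\<bar>\<theta>\<bar> = \<omega> * real (Suc k)"
      using s L eps \<omega> by (auto simp: \<theta>_def \<omega>_def abs_mult)
    define p where "p = 2 * Complex b \<theta> / complex_of_real c"
    have q0: "2/c - 1 = 0" using c2 by simp
    have fk: "f k = P * e1 k * cmod (Rh p (2/c - 1) n)"
    proof -
      have "-((2*pi/(L*\<epsilon>))^2/(2*c)) * (real (Suc k))^2 = -a * (real (Suc k))^2"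
        by (simp add: a_def \<omega>_def)
      then show ?thesis
        unfolding f_def coef_norm[OF sig c s] P_def A0_def e1_def b_def \<theta>_def p_def by simp
    qed
    have pb: "cmod p \<le> 2 * (\<bar>b\<bar>/c + \<bar>\<theta>\<bar>/c)"
      unfolding p_def by (rule norm_p_bound[OF cpos])
    then have pb2: "cmod p \<le> \<bar>\<mu>\<bar> + \<omega> * real (Suc k)" using c2 bmu th by simp
    have "cmod (Rh p (2/c - 1) n) = cmod p ^ n" unfolding q0 Rh_zero by (simp add: norm_power)
    also have "\<dots> \<le> (\<bar>\<mu>\<bar> + \<omega> * real (Suc k)) ^ n" by (intro power_mono pb2) auto
    also have "\<dots> \<le> K2 * (\<bar>\<mu>\<bar>^n + (\<omega> * real (Suc k))^n)"
      unfolding K2_def by (rule pow_sum_le_powr) (use \<omega> in auto)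
    also have "\<dots> = K2 * (X + Y * real (Suc k)^n)" by (simp add: X_def Y_def power_mult_distrib)
    finally have Rb2: "cmod (Rh p (2/c - 1) n) \<le> K2 * (X + Y * real (Suc k)^n)" .
    have e1pos: "e1 k \<ge> 0" by (simp add: e1_def)
    have "f k \<le> P * e1 k * (K2 * (X + Y * real (Suc k)^n))"
      unfolding fk using P e1pos by (intro mult_left_mono Rb2) auto
    also have "\<dots> = (P * K2) * (X * e1 k + Y * e2 k)"
      by (simp add: e1_def e2_def algebra_simps)
    finally show ?thesis .
  qed
  have f0: "0 \<le> f k" for k by (simp add: f_def)
  have PK: "P * K2 \<ge> 0" using P K2 by simp
  note sc = sum_comb[OF f0 fb PK X Y s1 conjunct1[OF s2] E1b conjunct2[OF s2]]
  have final: "(P * K2) * (X * E1 + Y * E2) \<le> (P * K2) * (exp (-a) * (X * (1 + 1/(2*a)) + Y * (1 + exp (real n - 1) / 2)))"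
  proof (intro mult_left_mono PK)
    show "X * E1 + Y * E2 \<le> exp (-a) * (X * (1 + 1/(2*a)) + Y * (1 + exp (real n - 1) / 2))"
    proof (cases "n = 0")
      case True
      then have XY: "X = 1" "Y = 1" by (simp_all add: X_def Y_def)
      have "X * E1 + Y * E2 = exp (-a) * (2 + 1/(2*a))"
        using True XY apos by (simp add: E1_def E2_def field_simps)
      also have "\<dots> \<le> exp (-a) * ((1 + 1/(2*a)) + (1 + exp (real n - 1) / 2))"
        by (intro mult_left_mono) auto
      finally show ?thesis using XY by simp
    next
      case False
      have t1: "X * E1 \<le> exp (-a) * (X * (1 + 1/(2*a)))"
      proof -
        have "1/(4*a) \<le> 1/(2*a)" using apos by (simp add: frac_le)
        then have "E1 \<le> exp (-a) * (1 + 1/(2*a))" unfolding E1_def by (intro mult_left_mono) auto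
        then show ?thesis using X by (simp add: mult_left_mono mult.left_commute)
      qed
      have t2: "Y * E2 \<le> exp (-a) * (Y * (1 + exp (real n - 1) / 2))"
      proof -
        have ge: "exp (real n - 1) \<ge> 1" using False by simp
        have "E2 = exp (-a) * (3/2)" using False by (simp add: E2_def)
        also have "\<dots> \<le> exp (-a) * (1 + exp (real n - 1) / 2)" using ge by (intro mult_left_mono) auto
        finally have "E2 \<le> exp (-a) * (1 + exp (real n - 1) / 2)" .
        then show ?thesis using Y by (simp add: mult_left_mono mult.left_commute)
      qed
      show ?thesis using t1 t2 by (simp add: distrib_left)
    qed
  qed
  have rhs: "pi powr (1/4) * 2 powr (real n - 1) * exp (- \<mu>\<^sup>2 / 4) / sqrt (2 ^ n * fact n)
           * exp (- pi\<^sup>2 / (L\<^sup>2 * \<epsilon>\<^sup>2))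
           * (\<bar>\<mu>\<bar> ^ n * (1 + L\<^sup>2 * \<epsilon>\<^sup>2 / (2 * pi\<^sup>2))
              + (2 * pi / (L * \<epsilon>)) ^ n * (1 + exp (real n - 1) / 2))
     = (P * K2) * (exp (-a) * (X * (1 + 1/(2*a)) + Y * (1 + exp (real n - 1) / 2)))"
  proof -
    have h1: "pi powr (1/4) * 2 powr (real n - 1) * exp (- \<mu>\<^sup>2 / 4) / sqrt (2 ^ n * fact n) = P * K2"
    proof -
      have ee: "exp (- \<mu>\<^sup>2 / 4) = exp (- \<mu>\<^sup>2 / (2 * \<sigma>\<^sup>2)) * exp (b^2/(2*c))"
        unfolding exp_add[symmetric] using one c2 bmu by simp
      have sq: "sqrt (2 ^ n * fact n) = sqrt (c * 2 powr (real n - 1) * fact n)"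
      proof -
        have "c * 2 powr (real n - 1) = 2 ^ n" using c2 by (simp add: powr_diff powr_realpow)
        then show ?thesis by (simp add: mult.assoc)
      qed
      show ?thesis
        unfolding ee sq P_def A0_def K2_def
        by (rule aux_h1b[OF const_eq[OF cpos]])
    qed
    have h2a: "- pi\<^sup>2 / (L\<^sup>2 * \<epsilon>\<^sup>2) = -a" using ha2 by simp
    have h2: "exp (- pi\<^sup>2 / (L\<^sup>2 * \<epsilon>\<^sup>2)) = exp (-a)" unfolding h2a ..
    have h4a: "1/(2*a) = L\<^sup>2 * \<epsilon>\<^sup>2 / (2 * pi\<^sup>2)"
      unfolding ha2[symmetric] using L eps by (simp add: field_simps)
    have h4: "1 + L\<^sup>2 * \<epsilon>\<^sup>2 / (2 * pi\<^sup>2) = 1 + 1/(2*a)" unfolding h4a ..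
    have h5: "2 * pi / (L * \<epsilon>) = \<omega>" unfolding \<omega>_def ..
    show ?thesis unfolding h1 h2 h4 h5 X_def[symmetric] Y_def[symmetric]
      by (simp add: algebra_simps)
  qed
  have S: "summable (\<lambda>k. cmod (gauss_fourier_coeff n \<mu> \<sigma> L \<epsilon> s (Suc k)))"
    using sc(1) unfolding f_def[abs_def] .
  have T: "(\<Sum>k. cmod (gauss_fourier_coeff n \<mu> \<sigma> L \<epsilon> s (Suc k)))
     \<le> (P * K2) * (exp (-a) * (X * (1 + 1/(2*a)) + Y * (1 + exp (real n - 1) / 2)))"
    using order_trans[OF sc(2) final] unfolding f_def[abs_def] .
  show ?thesis unfolding rhs using S T by (rule conjI)
qed

theorem lemma4p4:
  fixes \<mu> \<sigma> L \<epsilon> c s :: real and n :: nat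
  assumes "\<sigma> > 0" and "L > 0" and "\<epsilon> > 0"
    and "c = (\<sigma>\<^sup>2 + 1) / \<sigma>\<^sup>2"
    and "real n < 2 * pi\<^sup>2 / (L\<^sup>2 * \<epsilon>\<^sup>2 * c)"
    and "s = 1 \<or> s = -1"
  shows
   "(\<sigma>\<^sup>2 \<noteq> 1 \<longrightarrow>
      summable (\<lambda>k. cmod (gauss_fourier_coeff n \<mu> \<sigma> L \<epsilon> s (Suc k))) \<and>
      (\<Sum>k. cmod (gauss_fourier_coeff n \<mu> \<sigma> L \<epsilon> s (Suc k)))
        \<le> (pi powr (1/4) * 4 ^ n * (1 + real n / 2)
             * exp (- \<mu>\<^sup>2 / (2 * \<sigma>\<^sup>2) + \<mu>\<^sup>2 / (2 * c * \<sigma> ^ 4))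
             / sqrt (c * 2 powr (real n - 1) * fact n))
           * exp (- 2 * pi\<^sup>2 / (L\<^sup>2 * \<epsilon>\<^sup>2 * c))
           * ((sqrt 2 ^ n * sqrt (real n) ^ n * sqrt \<bar>2 / c - 1\<bar> ^ n
                + 2 powr (real n - 1) * (\<bar>\<mu>\<bar> / (c * \<sigma>\<^sup>2)) ^ n)
                * (1 + L\<^sup>2 * \<epsilon>\<^sup>2 * c / (4 * pi\<^sup>2))
              + 2 powr (real n - 1) * (2 * pi / (L * \<epsilon> * c)) ^ n
                * (1 + exp (real n - 1) / 2))) \<and>
    (\<sigma>\<^sup>2 = 1 \<longrightarrow>
      summable (\<lambda>k. cmod (gauss_fourier_coeff n \<mu> \<sigma> L \<epsilon> s (Suc k))) \<and>
      (\<Sum>k. cmod (gauss_fourier_coeff n \<mu> \<sigma> L \<epsilon> s (Suc k)))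
        \<le> pi powr (1/4) * 2 powr (real n - 1) * exp (- \<mu>\<^sup>2 / 4) / sqrt (2 ^ n * fact n)
           * exp (- pi\<^sup>2 / (L\<^sup>2 * \<epsilon>\<^sup>2))
           * (\<bar>\<mu>\<bar> ^ n * (1 + L\<^sup>2 * \<epsilon>\<^sup>2 / (2 * pi\<^sup>2))
              + (2 * pi / (L * \<epsilon>)) ^ n * (1 + exp (real n - 1) / 2)))"
proof (intro conjI impI)
  assume "\<sigma>\<^sup>2 \<noteq> 1"
  show "summable (\<lambda>k. cmod (gauss_fourier_coeff n \<mu> \<sigma> L \<epsilon> s (Suc k)))"
    using main_general[OF assms] by blast
  show "(\<Sum>k. cmod (gauss_fourier_coeff n \<mu> \<sigma> L \<epsilon> s (Suc k)))
        \<le> (pi powr (1/4) * 4 ^ n * (1 + real n / 2)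
             * exp (- \<mu>\<^sup>2 / (2 * \<sigma>\<^sup>2) + \<mu>\<^sup>2 / (2 * c * \<sigma> ^ 4))
             / sqrt (c * 2 powr (real n - 1) * fact n))
           * exp (- 2 * pi\<^sup>2 / (L\<^sup>2 * \<epsilon>\<^sup>2 * c))
           * ((sqrt 2 ^ n * sqrt (real n) ^ n * sqrt \<bar>2 / c - 1\<bar> ^ n
                + 2 powr (real n - 1) * (\<bar>\<mu>\<bar> / (c * \<sigma>\<^sup>2)) ^ n)
                * (1 + L\<^sup>2 * \<epsilon>\<^sup>2 * c / (4 * pi\<^sup>2))
              + 2 powr (real n - 1) * (2 * pi / (L * \<epsilon> * c)) ^ n
                * (1 + exp (real n - 1) / 2))"
    using main_general[OF assms] by blast
next
  assume one: "\<sigma>\<^sup>2 = 1"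
  show "summable (\<lambda>k. cmod (gauss_fourier_coeff n \<mu> \<sigma> L \<epsilon> s (Suc k)))"
    using main_one[OF assms one] by blast
  show "(\<Sum>k. cmod (gauss_fourier_coeff n \<mu> \<sigma> L \<epsilon> s (Suc k)))
        \<le> pi powr (1/4) * 2 powr (real n - 1) * exp (- \<mu>\<^sup>2 / 4) / sqrt (2 ^ n * fact n)
           * exp (- pi\<^sup>2 / (L\<^sup>2 * \<epsilon>\<^sup>2))
           * (\<bar>\<mu>\<bar> ^ n * (1 + L\<^sup>2 * \<epsilon>\<^sup>2 / (2 * pi\<^sup>2))
              + (2 * pi / (L * \<epsilon>)) ^ n * (1 + exp (real n - 1) / 2))"
    using main_one[OF assms one] by blast
qed

end
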